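(* Let $\rho$ be a quantum state on a separable Hilbert space with spectrum $\{\lambda^{\rho}_i\}_{i=1}^{+\infty}$ arranged in non-increasing order. If $$\sum_{i=1}^{+\infty}\lambda^{\rho}_i \ln^2 i<+\infty,$$ then $\rho$ has the FA-property.
   Context: A state $\rho$ with spectrum $\{\lambda^{\rho}_i\}_{i=1}^{+\infty}$ (eigenvalues in non-increasing order, counting multiplicity, padded with zeros if the rank is finite) has the FA-property (finite-dimensional approximation property) if there exists a sequence $\{g_i\}_{i=1}^{+\infty}$ of nonnegative numbers such that $\sum_{i=1}^{+\infty}\lambda^{\rho}_i g_i<+\infty$ and $\lim_{\beta\to 0^+}\left[\sum_{i=1}^{+\infty}e^{-\beta g_i}\right]^{\beta}=1$. *)

theory Defs
  imports "HOL-Analysis.Analysis"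
begin

text \<open>Spectrum of a quantum state (density operator on a separable Hilbert space):
  eigenvalues counted with multiplicity, in non-increasing order, padded with zeros,
  nonnegative and summing to 1 (trace one). Index shift: lam k is the paper's
  lambda_(k+1).\<close>
definition state_spectrum :: "(nat \<Rightarrow> real) \<Rightarrow> bool" where
  "state_spectrum lam \<longleftrightarrow> (\<forall>k. 0 \<le> lam k) \<and> antimono lam \<and> lam sums 1"

text \<open>The limit condition requires the
  series of exponentials to be finite for all small beta (otherwise the bracket is
  +infinity), and its beta-th power to tend to 1 as beta tends to 0 from the right.\<close>
definition FA_property :: "(nat \<Rightarrow> real) \<Rightarrow> bool" where
  "FA_property lam \<longleftrightarrow> (\<exists>g :: nat \<Rightarrow> real.
      (\<forall>k. 0 \<le> g k) \<and>
      summable (\<lambda>k. lam k * g k) \<and>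
      (\<forall>\<^sub>F \<beta> in at_right 0. summable (\<lambda>k. exp (- \<beta> * g k))) \<and>
      ((\<lambda>\<beta>. (\<Sum>k. exp (- \<beta> * g k)) powr \<beta>) \<longlongrightarrow> 1) (at_right (0::real)))"

end

theory Submission
  imports Defs
begin

lemma key_exp_bound:
  fixes t L :: real
  assumes "t > 0" "L \<ge> 0"
  shows "exp (- t * L\<^sup>2) \<le> exp (1 / t) * exp (- 2 * L)"
proof -
  have "- t * L\<^sup>2 \<le> 1 / t + - 2 * L"
  proof -
    have "0 \<le> (t * L - 1)\<^sup>2 / t" using assms by simp
    also have "(t * L - 1)\<^sup>2 / t = t * L\<^sup>2 - 2 * L + 1 / t"
      using assms by (simp add: field_simps power2_eq_square)
    finally show ?thesis by linarith
  qed
  then show ?thesis by (simp add: exp_add[symmetric])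
qed

lemma summable_inv_sq: "summable (\<lambda>k. inverse (real (Suc k) ^ 2))"
proof -
  have "summable (\<lambda>n. inverse (real n ^ 2))"
    using inverse_power_summable[of 2] by simp
  then have "summable (\<lambda>n. inverse (real (n + 1) ^ 2))"
    using summable_iff_shift[of "\<lambda>n. inverse (real n ^ 2)" 1] by simp
  then show ?thesis by simp
qed

lemma grow_factor:
  fixes a :: "nat \<Rightarrow> real"
  assumes a0: "\<And>k. 0 \<le> a k" and sa: "summable a"
  shows "\<exists>h. (\<forall>k. 0 \<le> h k) \<and> summable (\<lambda>k. a k * h k) \<and> (\<forall>c. \<forall>\<^sub>F k in sequentially. c \<le> h k)"
proof -
  define b where "b k = a k + (1/2::real)^k" for k
  have sb: "summable b" unfolding b_def
    by (intro summable_add sa summable_geometric) simp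
  have bpos: "b k > 0" for k unfolding b_def using a0[of k] by (simp add: add_nonneg_pos)
  define r where "r k = (\<Sum>j. b (j + k))" for k
  have sbk: "summable (\<lambda>j. b (j + k))" for k using sb by simp
  have rpos: "r k > 0" for k unfolding r_def
    using suminf_pos[OF sbk[of k]] bpos by simp
  have rstep: "r k = b k + r (Suc k)" for k
  proof -
    have "(\<Sum>j. b (Suc j + k)) = (\<Sum>j. b (j + k)) - b (0 + k)"
      using suminf_split_head[OF sbk[of k]] by simp
    then show ?thesis unfolding r_def by simp
  qed
  have rlim: "r \<longlonglongrightarrow> 0" unfolding r_def by (rule suminf_exist_split2[OF sb])
  define h where "h k = 1 / sqrt (r k)" for k
  have h0: "0 \<le> h k" for k unfolding h_def using rpos[of k] by simp
  have sqlim: "(\<lambda>k. sqrt (r k)) \<longlonglongrightarrow> 0"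
    using tendsto_real_sqrt[OF rlim] by simp
  have bh: "b k * h k \<le> 2 * (sqrt (r k) - sqrt (r (Suc k)))" for k
  proof -
    define x where "x = sqrt (r k)"
    define y where "y = sqrt (r (Suc k))"
    have xp: "x > 0" unfolding x_def using rpos by simp
    have yp: "y > 0" unfolding y_def using rpos by simp
    have bxy: "b k = x\<^sup>2 - y\<^sup>2" unfolding x_def y_def using rstep[of k] rpos[of k] rpos[of "Suc k"] by (simp add: order.strict_implies_order)
    have yx: "y \<le> x" using bxy bpos[of k] xp yp
      by (smt (verit) power_mono)
    have "(x - y) * (x + y) = x\<^sup>2 - y\<^sup>2" by (simp add: power2_eq_square algebra_simps)
    then have "b k * h k = (x - y) * (x + y) / x" unfolding h_def x_def[symmetric] bxy
      by simp
    also have "\<dots> \<le> (x - y) * (2 * x) / x"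
      using xp yx by (intro divide_right_mono mult_left_mono) auto
    also have "\<dots> = 2 * (x - y)" using xp by simp
    finally show ?thesis unfolding x_def y_def .
  qed
  have s2: "summable (\<lambda>k. 2 * (sqrt (r k) - sqrt (r (Suc k))))"
    by (intro summable_mult telescope_summable'[OF sqlim])
  have sbh: "summable (\<lambda>k. b k * h k)"
    by (rule summable_comparison_test'[OF s2]) (use bh bpos h0 in \<open>auto simp: abs_of_nonneg order.strict_implies_order\<close>)
  have sah: "summable (\<lambda>k. a k * h k)"
    by (rule summable_comparison_test'[OF sbh]) (auto simp: b_def a0 h0 intro!: mult_right_mono)
  have ev: "\<forall>\<^sub>F k in sequentially. c \<le> h k" for c
  proof (cases "c \<le> 0")
    case True then show ?thesis using h0 by (intro always_eventually allI) (meson order_trans)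
  next
    case False
    then have "0 < 1 / c\<^sup>2" by simp
    from order_tendstoD(2)[OF rlim this]
    show ?thesis
    proof (rule eventually_mono)
      fix k assume "r k < 1 / c\<^sup>2"
      then have "sqrt (r k) < sqrt (1 / c\<^sup>2)" by (simp add: real_sqrt_less_mono)
      also have "\<dots> = 1 / c" using False by (simp add: real_sqrt_divide)
      finally have "sqrt (r k) * c < 1" using False by (simp add: field_simps)
      then show "c \<le> h k" unfolding h_def using rpos[of k] by (simp add: field_simps)
    qed
  qed
  show ?thesis using h0 sah ev by blast
qed

theorem proposition2:
  fixes lam :: "nat \<Rightarrow> real"
  assumes "state_spectrum lam"
    and "summable (\<lambda>k. lam k * (ln (real (k + 1)))\<^sup>2)"
  shows "FA_property lam"
proof -
  define L where "L k = ln (real (k + 1))" for k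
  have L0: "L k \<ge> 0" for k unfolding L_def by simp
  have lam0: "0 \<le> lam k" for k using assms(1) unfolding state_spectrum_def by simp
  obtain h where h0: "\<And>k. 0 \<le> h k" and sh: "summable (\<lambda>k. lam k * (L k)\<^sup>2 * h k)"
    and hev: "\<And>c. \<forall>\<^sub>F k in sequentially. c \<le> h k"
    using grow_factor[of "\<lambda>k. lam k * (L k)\<^sup>2"] assms(2) lam0 unfolding L_def by auto
  define g where "g k = (L k)\<^sup>2 * h k" for k
  have g0: "0 \<le> g k" for k unfolding g_def using h0 by simp
  have sg: "summable (\<lambda>k. lam k * g k)" using sh unfolding g_def by (simp add: mult.assoc)
  have expL: "exp (- 2 * L k) = inverse (real (Suc k) ^ 2)" for k
  proof -
    have "exp (- 2 * L k) = inverse (exp (L k) ^ 2)"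
      by (simp add: exp_minus[symmetric] exp_of_nat_mult[symmetric])
    then show ?thesis unfolding L_def by simp
  qed
  have bound: "\<exists>K\<ge>1. \<forall>\<beta>>0. summable (\<lambda>k. exp (- \<beta> * g k)) \<and>
                 (\<Sum>k. exp (- \<beta> * g k)) \<le> K * exp (1 / (\<beta> * c))" if c: "c > 0" for c
  proof -
    from hev[of c] obtain N where hN: "\<And>k. k \<ge> N \<Longrightarrow> c \<le> h k"
      unfolding eventually_sequentially by blast
    define w where "w k = (real N + 1)\<^sup>2 * inverse (real (Suc k) ^ 2)" for k
    have sw: "summable w" unfolding w_def by (intro summable_mult summable_inv_sq)
    define K where "K = suminf w"
    have w0: "w 0 = (real N + 1)\<^sup>2" unfolding w_def by simp
    have wpos: "w k \<ge> 0" for k unfolding w_def by simp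
    have "w 0 \<le> K" unfolding K_def using sw wpos
      by (metis sum_le_suminf finite_insert finite.emptyI sum.insert sum.empty add_0_right empty_iff subsetI UNIV_I insert_subset empty_subsetI)
    moreover have "1 \<le> w 0" unfolding w0 by simp
    ultimately have K1: "K \<ge> 1" by simp
    have main: "summable (\<lambda>k. exp (- \<beta> * g k)) \<and> (\<Sum>k. exp (- \<beta> * g k)) \<le> K * exp (1 / (\<beta> * c))"
      if b: "\<beta> > 0" for \<beta>
    proof -
      have E1: "1 \<le> exp (1 / (\<beta> * c))" using b c by simp
      have tb: "exp (- \<beta> * g k) \<le> exp (1 / (\<beta> * c)) * w k" for k
      proof (cases "k < N")
        case True
        have "exp (- \<beta> * g k) \<le> 1" using b g0[of k] by simp
        also have "1 \<le> w k"
        proof -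
          have "real (Suc k) ^ 2 \<le> (real N + 1)\<^sup>2" using True by (intro power_mono) auto
          then show ?thesis unfolding w_def by (simp add: field_simps)
        qed
        also have "w k \<le> exp (1 / (\<beta> * c)) * w k" using E1 wpos[of k]
          by (metis mult_le_cancel_right2 mult.commute mult_right_mono mult_1_left)
        finally show ?thesis .
      next
        case False
        have "- \<beta> * g k \<le> - (\<beta> * c) * (L k)\<^sup>2"
          using hN[of k] False b unfolding g_def
          by (simp add: mult_right_mono mult_left_mono mult.commute[of _ "h k"])
        then have "exp (- \<beta> * g k) \<le> exp (- (\<beta> * c) * (L k)\<^sup>2)" by simp
        also have "\<dots> \<le> exp (1 / (\<beta> * c)) * exp (- 2 * L k)"
          by (rule key_exp_bound) (use b c L0 in auto)
        also have "\<dots> \<le> exp (1 / (\<beta> * c)) * w k"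
          unfolding expL w_def
          by (intro mult_left_mono) (auto simp: field_simps)
        finally show ?thesis .
      qed
      have sm: "summable (\<lambda>k. exp (1 / (\<beta> * c)) * w k)" by (intro summable_mult sw)
      have s1: "summable (\<lambda>k. exp (- \<beta> * g k))"
        by (rule summable_comparison_test'[OF sm]) (use tb in auto)
      have "(\<Sum>k. exp (- \<beta> * g k)) \<le> (\<Sum>k. exp (1 / (\<beta> * c)) * w k)"
        by (rule suminf_le[OF _ s1 sm]) (use tb in auto)
      also have "\<dots> = exp (1 / (\<beta> * c)) * K" unfolding K_def by (rule suminf_mult[OF sw])
      finally show ?thesis using s1 by (simp add: mult.commute)
    qed
    show ?thesis using K1 main by blast
  qed
  have summ: "summable (\<lambda>k. exp (- \<beta> * g k))" if "\<beta> > 0" for \<beta>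
    using bound[of 1] that by auto
  have S1: "1 \<le> (\<Sum>k. exp (- \<beta> * g k))" if "\<beta> > 0" for \<beta>
  proof -
    have "g 0 = 0" unfolding g_def L_def by simp
    then have "exp (- \<beta> * g 0) = 1" by simp
    moreover have "(\<Sum>k<1. exp (- \<beta> * g k)) \<le> (\<Sum>k. exp (- \<beta> * g k))"
      by (rule sum_le_suminf[OF summ[OF that]]) auto
    moreover have "(\<Sum>k<1. exp (- \<beta> * g k)) = exp (- \<beta> * g 0)" by simp
    ultimately show ?thesis by linarith
  qed
  have lim: "((\<lambda>\<beta>. (\<Sum>k. exp (- \<beta> * g k)) powr \<beta>) \<longlongrightarrow> 1) (at_right (0::real))"
    unfolding tendsto_iff
  proof (intro allI impI)
    fix e :: real assume e: "e > 0"
    define c where "c = 1 / ln (1 + e / 2)"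
    have lnp: "ln (1 + e / 2) > 0" using e by simp
    have c0: "c > 0" unfolding c_def using lnp by simp
    have ec: "exp (1 / c) = 1 + e / 2" unfolding c_def using e by simp
    obtain K where K1: "K \<ge> 1" and KB: "\<And>\<beta>. \<beta> > 0 \<Longrightarrow> (\<Sum>k. exp (- \<beta> * g k)) \<le> K * exp (1 / (\<beta> * c))"
      using bound[OF c0] by blast
    have Klim: "((\<lambda>\<beta>. K powr \<beta>) \<longlongrightarrow> K powr 0) (at_right (0::real))"
      using K1 by (intro tendsto_powr tendsto_const tendsto_ident_at) auto
    have "(1 + e) / (1 + e / 2) > 1" using e by (simp add: field_simps)
    then have evK: "\<forall>\<^sub>F \<beta> in at_right 0. K powr \<beta> < (1 + e) / (1 + e / 2)"
      using order_tendstoD(2)[OF Klim] K1 by simp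
    have evp: "\<forall>\<^sub>F \<beta> in at_right (0::real). \<beta> > 0" by (simp add: eventually_at_right_less)
    show "\<forall>\<^sub>F \<beta> in at_right 0. dist ((\<Sum>k. exp (- \<beta> * g k)) powr \<beta>) 1 < e"
      using evK evp
    proof eventually_elim
      case (elim \<beta>)
      define S where "S = (\<Sum>k. exp (- \<beta> * g k))"
      have S1': "1 \<le> S" unfolding S_def using S1 elim by simp
      have lo: "1 \<le> S powr \<beta>" using S1' elim by (simp add: ge_one_powr_ge_zero)
      have "S powr \<beta> \<le> (K * exp (1 / (\<beta> * c))) powr \<beta>"
        using KB[of \<beta>] elim S1' unfolding S_def by (intro powr_mono2) auto
      also have "\<dots> = K powr \<beta> * exp (1 / c)"
        using elim K1 c0 by (simp add: powr_mult exp_powr_real)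
      also have "\<dots> < (1 + e) / (1 + e / 2) * (1 + e / 2)"
        unfolding ec using elim e by (intro mult_strict_right_mono) auto
      also have "\<dots> = 1 + e" using e by (simp add: field_simps)
      finally show ?case using lo unfolding S_def[symmetric] dist_real_def by simp
    qed
  qed
  show ?thesis unfolding FA_property_def
    using g0 sg lim summ
    by (intro exI[of _ g]) (auto simp: eventually_at_right_less intro: eventually_mono[OF eventually_at_right_less])
qed

end
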